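(* Let $X$ be a Köthe space over a $\sigma$-finite measure space $(S,\mu)$ such that $[X,X^*]_{1/2}=L_2(\mu)$, with associated differential $\Omega_X$ at $1/2$. For $0<\theta<1$ let $X_\theta=[X,L_\infty]_\theta$, so that $X_\theta^*=[X^*,L_1]_\theta$. Then $[X_\theta,X_\theta^*]_{1/2}=L_2(\mu)$ and the differential $\Omega_{X_\theta}$ generated by the pair $(X_\theta,X_\theta^* )$ at $1/2$ satisfies, up to bounded equivalence, $$\Omega_{X_\theta}=(1-\theta)\Omega_X+\theta\,\mathsf{KP}_2.$$
   Context: Köthe space: $L_\infty$-submodule of $L_0(\mu)$ complete under a lattice norm. $X^*$ is the Köthe dual $\{g:\ fg\in L_1\ \forall f\in X\}$. Pairs are assumed regular (intersection dense in both), so that $[A,B]_\theta=A^{1-\theta}B^\theta$ and the differential at $\theta$ is $x\mapsto x\log(|b(x)|/|a(x)|)$ for almost optimal factorizations $|x|=|a(x)|^{1-\theta}|b(x)|^\theta$. $\mathsf{KP}_2$ is the Kalton–Peck centralizer on $L_2(\mu)$, i.e. the differential of $(L_\infty,L_1)$ at $1/2$: $\mathsf{KP}_2(x)=2x\log(|x|/\|x\|_2)$. Bounded equivalence: the difference is a bounded homogeneous map into the space. *)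

theory Defs
  imports "HOL-Analysis.Analysis"
begin

text \<open>A space is encoded by its
(lattice) norm N :: ('a => real) => ennreal; the space itself is the set of measurable
functions of finite norm.  Functions are not quotiented by a.e. equality; all norms
below are invariant under a.e. equality.\<close>

definition kspace :: "'a measure \<Rightarrow> (('a \<Rightarrow> real) \<Rightarrow> ennreal) \<Rightarrow> ('a \<Rightarrow> real) set" where
  "kspace M N = {f \<in> borel_measurable M. N f < \<infinity>}"

definition koethe :: "'a measure \<Rightarrow> (('a \<Rightarrow> real) \<Rightarrow> ennreal) \<Rightarrow> bool" where
  "koethe M N \<longleftrightarrow>
     \<comment> \<open>lattice (ideal) property, which also gives a.e.-invariance and the L_infinity-module structure\<close>
     (\<forall>f g. f \<in> borel_measurable M \<longrightarrow> g \<in> borel_measurable M \<longrightarrow>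
        (AE s in M. \<bar>f s\<bar> \<le> \<bar>g s\<bar>) \<longrightarrow> N f \<le> N g)
     \<comment> \<open>norm axioms\<close>
   \<and> (\<forall>f c. f \<in> borel_measurable M \<longrightarrow> N (\<lambda>s. c * f s) = ennreal \<bar>c\<bar> * N f)
   \<and> (\<forall>f g. f \<in> borel_measurable M \<longrightarrow> g \<in> borel_measurable M \<longrightarrow>
        N (\<lambda>s. f s + g s) \<le> N f + N g)
   \<and> (\<forall>f. f \<in> borel_measurable M \<longrightarrow> N f = 0 \<longrightarrow> (AE s in M. f s = 0))
     \<comment> \<open>completeness\<close>
   \<and> (\<forall>F. (\<forall>n. F n \<in> kspace M N) \<longrightarrow>
        (\<forall>e>0. \<exists>n0. \<forall>m\<ge>n0. \<forall>n\<ge>n0. N (\<lambda>s. F m s - F n s) < ennreal e) \<longrightarrow>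
        (\<exists>f\<in>kspace M N. (\<lambda>n. N (\<lambda>s. F n s - f s)) \<longlonglongrightarrow> 0))"

definition kdual :: "'a measure \<Rightarrow> (('a \<Rightarrow> real) \<Rightarrow> ennreal) \<Rightarrow> ('a \<Rightarrow> real) \<Rightarrow> ennreal" where
  "kdual M N g = (if g \<in> borel_measurable M then
     (SUP f\<in>{f \<in> borel_measurable M. N f \<le> 1}. \<integral>\<^sup>+ s. ennreal \<bar>f s * g s\<bar> \<partial>M) else \<infinity>)"

definition L1norm :: "'a measure \<Rightarrow> ('a \<Rightarrow> real) \<Rightarrow> ennreal" where
  "L1norm M f = (if f \<in> borel_measurable M then \<integral>\<^sup>+ s. ennreal \<bar>f s\<bar> \<partial>M else \<infinity>)"

definition L2norm :: "'a measure \<Rightarrow> ('a \<Rightarrow> real) \<Rightarrow> ennreal" where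
  "L2norm M f = (if f \<in> borel_measurable M then
     (let I = \<integral>\<^sup>+ s. ennreal ((f s)\<^sup>2) \<partial>M in
      if I = \<infinity> then \<infinity> else ennreal (sqrt (enn2real I))) else \<infinity>)"

definition Linfnorm :: "'a measure \<Rightarrow> ('a \<Rightarrow> real) \<Rightarrow> ennreal" where
  "Linfnorm M f = (if f \<in> borel_measurable M then
     Inf {ennreal c | c. 0 \<le> c \<and> (AE s in M. \<bar>f s\<bar> \<le> c)} else \<infinity>)"

text \<open>Calderon product A^(1-theta) B^theta (= complex interpolation space [A,B]_theta
for regular pairs, as assumed in the paper).\<close>
definition calderon :: "'a measure \<Rightarrow> real \<Rightarrow> (('a \<Rightarrow> real) \<Rightarrow> ennreal) \<Rightarrow>
    (('a \<Rightarrow> real) \<Rightarrow> ennreal) \<Rightarrow> ('a \<Rightarrow> real) \<Rightarrow> ennreal" where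
  "calderon M \<theta> NA NB x = (if x \<in> borel_measurable M then
     Inf {ennreal l | l a b. 0 \<le> l \<and> a \<in> borel_measurable M \<and> b \<in> borel_measurable M \<and>
            NA a \<le> 1 \<and> NB b \<le> 1 \<and>
            (AE s in M. \<bar>x s\<bar> \<le> l * \<bar>a s\<bar> powr (1 - \<theta>) * \<bar>b s\<bar> powr \<theta>)} else \<infinity>)"

definition almost_opt_fact :: "'a measure \<Rightarrow> real \<Rightarrow> (('a \<Rightarrow> real) \<Rightarrow> ennreal) \<Rightarrow>
    (('a \<Rightarrow> real) \<Rightarrow> ennreal) \<Rightarrow> real \<Rightarrow> (('a \<Rightarrow> real) \<Rightarrow> 'a \<Rightarrow> real) \<Rightarrow>
    (('a \<Rightarrow> real) \<Rightarrow> 'a \<Rightarrow> real) \<Rightarrow> bool" where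
  "almost_opt_fact M \<theta> NA NB C a b \<longleftrightarrow>
     (\<forall>x\<in>kspace M (calderon M \<theta> NA NB).
        a x \<in> borel_measurable M \<and> b x \<in> borel_measurable M \<and>
        (AE s in M. \<bar>x s\<bar> = \<bar>a x s\<bar> powr (1 - \<theta>) * \<bar>b x s\<bar> powr \<theta>) \<and>
        NA (a x) \<le> ennreal C * calderon M \<theta> NA NB x \<and>
        NB (b x) \<le> ennreal C * calderon M \<theta> NA NB x)"

definition differential :: "(('a \<Rightarrow> real) \<Rightarrow> 'a \<Rightarrow> real) \<Rightarrow> (('a \<Rightarrow> real) \<Rightarrow> 'a \<Rightarrow> real) \<Rightarrow>
    ('a \<Rightarrow> real) \<Rightarrow> 'a \<Rightarrow> real" where
  "differential a b x = (\<lambda>s. if x s = 0 then 0 else x s * ln (\<bar>b x s\<bar> / \<bar>a x s\<bar>))"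

definition KP2 :: "'a measure \<Rightarrow> ('a \<Rightarrow> real) \<Rightarrow> 'a \<Rightarrow> real" where
  "KP2 M x = (\<lambda>s. if x s = 0 then 0 else 2 * x s * ln (\<bar>x s\<bar> / enn2real (L2norm M x)))"

end

theory Submission
  imports Defs
begin


lemma young0:
  fixes P Q :: real assumes "0 \<le> P" "0 \<le> Q" "0 < \<theta>" "\<theta> < 1"
  shows "P powr (1-\<theta>) * Q powr \<theta> \<le> (1-\<theta>)*P + \<theta>*Q"
proof (cases "P = 0 \<or> Q = 0")
  case True then show ?thesis using assms by auto
next
  case False then show ?thesis using assms Youngs_inequality_0[of "1-\<theta>" \<theta> P Q] by auto
qed

lemma young_scaled:
  fixes P Q A m :: real assumes "0 \<le> P" "0 \<le> Q" "0 < A" "0 < m" "0 < \<theta>" "\<theta> < 1"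
  shows "P powr (1-\<theta>) * Q powr \<theta> \<le> A powr (1-\<theta>) * m powr \<theta> * ((1-\<theta>)*(P/A) + \<theta>*(Q/m))"
proof -
  have "(P/A) powr (1-\<theta>) * (Q/m) powr \<theta> \<le> (1-\<theta>)*(P/A) + \<theta>*(Q/m)"
    using assms by (intro young0) auto
  moreover have "P powr (1-\<theta>) * Q powr \<theta> = A powr (1-\<theta>) * m powr \<theta> * ((P/A) powr (1-\<theta>) * (Q/m) powr \<theta>)"
    using assms by (simp add: powr_divide field_simps)
  moreover have "0 \<le> A powr (1-\<theta>) * m powr \<theta>" by simp
  ultimately show ?thesis by (metis mult_left_mono)
qed

lemma exp_sq_bound: fixes t :: real shows "t^2 \<le> 4 * (exp t + exp (-t))"
proof -
  have e: "exp \<bar>t\<bar> = (exp (\<bar>t\<bar>/2))^2" by (simp add: power2_eq_square flip: exp_add)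
  have "1 + \<bar>t\<bar>/2 \<le> exp (\<bar>t\<bar>/2)" by (rule exp_ge_add_one_self)
  then have "(1 + \<bar>t\<bar>/2)^2 \<le> (exp (\<bar>t\<bar>/2))^2" by (intro power_mono) auto
  moreover have "t^2 \<le> 4 * (1 + \<bar>t\<bar>/2)^2" by (simp add: power2_eq_square algebra_simps)
  moreover have "exp \<bar>t\<bar> \<le> exp t + exp (-t)" by (cases "t \<ge> 0") auto
  ultimately have "t^2 \<le> 4 * exp \<bar>t\<bar>" using e by (smt (verit))
  with \<open>exp \<bar>t\<bar> \<le> exp t + exp (-t)\<close> show ?thesis by (smt (verit))
qed



lemma kdual_ge:
  "f \<in> borel_measurable M \<Longrightarrow> g \<in> borel_measurable M \<Longrightarrow> NA f \<le> 1 \<Longrightarrow>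
   (\<integral>\<^sup>+ s. ennreal \<bar>f s * g s\<bar> \<partial>M) \<le> kdual M NA g"
  unfolding kdual_def by (auto intro!: SUP_upper)

lemma kdual_leI:
  "g \<in> borel_measurable M \<Longrightarrow>
   (\<And>f. f \<in> borel_measurable M \<Longrightarrow> NA f \<le> 1 \<Longrightarrow> (\<integral>\<^sup>+ s. ennreal \<bar>f s * g s\<bar> \<partial>M) \<le> c) \<Longrightarrow>
   kdual M NA g \<le> c"
  unfolding kdual_def by (auto intro!: SUP_least)

lemma cal_le:
  assumes "x \<in> borel_measurable M" "0 \<le> l" "a \<in> borel_measurable M" "b \<in> borel_measurable M"
    "NA a \<le> 1" "NB b \<le> 1"
    "AE s in M. \<bar>x s\<bar> \<le> l * \<bar>a s\<bar> powr (1 - \<theta>) * \<bar>b s\<bar> powr \<theta>"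
  shows "calderon M \<theta> NA NB x \<le> ennreal l"
  unfolding calderon_def using assms by (auto intro!: Inf_lower)

lemma cal_obtain:
  assumes "calderon M \<theta> NA NB x < t"
  shows "x \<in> borel_measurable M \<and> (\<exists>l a b. 0 \<le> l \<and> ennreal l < t \<and> a \<in> borel_measurable M \<and> b \<in> borel_measurable M \<and>
    NA a \<le> 1 \<and> NB b \<le> 1 \<and> (AE s in M. \<bar>x s\<bar> \<le> l * \<bar>a s\<bar> powr (1 - \<theta>) * \<bar>b s\<bar> powr \<theta>))"
proof -
  have xm: "x \<in> borel_measurable M" using assms unfolding calderon_def by (auto split: if_splits)
  then show ?thesis using assms unfolding calderon_def by (auto simp: Inf_less_iff)
qed

lemma cal_mono:
  assumes xm: "x \<in> borel_measurable M" and ym: "y \<in> borel_measurable M" and c: "0 < c"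
    and dom: "AE s in M. \<bar>x s\<bar> \<le> c * \<bar>y s\<bar>"
  shows "calderon M \<theta> NA NB x \<le> ennreal c * calderon M \<theta> NA NB y"
proof (rule ennreal_le_epsilon)
  fix e :: real assume fin: "ennreal c * calderon M \<theta> NA NB y < top" and e: "0 < e"
  have yfin: "calderon M \<theta> NA NB y < top" using fin c
    by (auto simp: ennreal_mult_less_top top.not_eq_extremum)
  then have "calderon M \<theta> NA NB y < calderon M \<theta> NA NB y + ennreal (e/c)"
    using e c ennreal_add_left_cancel_less[of "calderon M \<theta> NA NB y" 0 "ennreal (e/c)"] by simp
  from cal_obtain[OF this] obtain l a b where l: "0 \<le> l" "ennreal l < calderon M \<theta> NA NB y + ennreal (e/c)"
    and ab: "a \<in> borel_measurable M" "b \<in> borel_measurable M" "NA a \<le> 1" "NB b \<le> 1"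
    and f: "AE s in M. \<bar>y s\<bar> \<le> l * \<bar>a s\<bar> powr (1 - \<theta>) * \<bar>b s\<bar> powr \<theta>" by blast
  have "AE s in M. \<bar>x s\<bar> \<le> (c*l) * \<bar>a s\<bar> powr (1 - \<theta>) * \<bar>b s\<bar> powr \<theta>"
    using f dom
  proof eventually_elim
    case (elim s)
    then have "c * \<bar>y s\<bar> \<le> c * (l * \<bar>a s\<bar> powr (1 - \<theta>) * \<bar>b s\<bar> powr \<theta>)" using c by simp
    then show ?case using elim by (simp add: mult.assoc)
  qed
  then have "calderon M \<theta> NA NB x \<le> ennreal (c*l)"
    using cal_le[where NA=NA and NB=NB and \<theta>=\<theta> and l="c*l" and a=a and b=b, OF xm _ ab] c l by auto
  also have "\<dots> = ennreal c * ennreal l" using c l by (simp add: ennreal_mult)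
  also have "\<dots> \<le> ennreal c * (calderon M \<theta> NA NB y + ennreal (e/c))"
    using l(2) by (intro mult_left_mono) auto
  also have "\<dots> = ennreal c * calderon M \<theta> NA NB y + ennreal e"
    using c e by (simp add: distrib_left flip: ennreal_mult)
  finally show "calderon M \<theta> NA NB x \<le> ennreal c * calderon M \<theta> NA NB y + ennreal e" .
qed



lemma L2norm_fin:
  assumes "x \<in> kspace M (L2norm M)"
  shows "x \<in> borel_measurable M" "(\<integral>\<^sup>+ s. ennreal ((x s)\<^sup>2) \<partial>M) \<noteq> \<infinity>"
    "L2norm M x = ennreal (sqrt (enn2real (\<integral>\<^sup>+ s. ennreal ((x s)\<^sup>2) \<partial>M)))"
  using assms unfolding kspace_def L2norm_def by (auto simp: Let_def split: if_splits)

lemma kspace_L2I: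
  assumes "x \<in> borel_measurable M" "(\<integral>\<^sup>+ s. ennreal ((x s)\<^sup>2) \<partial>M) < \<infinity>"
  shows "x \<in> kspace M (L2norm M)"
  using assms unfolding kspace_def L2norm_def by (auto simp: Let_def)

lemma ennreal_single_le_suminf: "(f::nat \<Rightarrow> ennreal) n \<le> (\<Sum>i. f i)"
  using sum_le_suminf[of f "{n}"] by auto

lemma cal_bound:
  assumes sub: "kspace M (L2norm M) \<subseteq> kspace M (calderon M \<theta> NA NB)"
  shows "\<exists>K. \<forall>x\<in>kspace M (L2norm M). 0 < L2norm M x \<longrightarrow>
     calderon M \<theta> NA NB x \<le> ennreal K * L2norm M x"
proof (rule ccontr)
  let ?C = "calderon M \<theta> NA NB"
  assume "\<not> ?thesis"
  then have "\<forall>n::nat. \<exists>x. x \<in> kspace M (L2norm M) \<and> 0 < L2norm M x \<and> ennreal (4^n) * L2norm M x < ?C x"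
    by (auto simp: not_le)
  then obtain X where X: "\<And>n. X n \<in> kspace M (L2norm M)" "\<And>n. 0 < L2norm M (X n)"
     "\<And>n. ennreal (4^n) * L2norm M (X n) < ?C (X n)" by metis
  define I where "I n = enn2real (\<integral>\<^sup>+ s. ennreal ((X n s)\<^sup>2) \<partial>M)" for n
  define r where "r n = sqrt (I n)" for n
  have Xm: "\<And>n. X n \<in> borel_measurable M" using L2norm_fin(1)[OF X(1)] .
  have Ieq: "(\<integral>\<^sup>+ s. ennreal ((X n s)\<^sup>2) \<partial>M) = ennreal (I n)" for n
    using L2norm_fin(2)[OF X(1)] unfolding I_def by (simp add: ennreal_enn2real_if)
  have L2X: "L2norm M (X n) = ennreal (r n)" for n using L2norm_fin(3)[OF X(1)] unfolding r_def I_def by simp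
  have rpos: "0 < r n" for n using X(2)[of n] unfolding L2X by (simp add: ennreal_less_zero_iff)
  have I0: "0 \<le> I n" for n unfolding I_def by simp
  have rI: "(r n)^2 = I n" for n unfolding r_def using I0 by simp
  define c where "c n = 2^n * r n" for n
  have cpos: "0 < c n" for n unfolding c_def using rpos by simp
  define y where "y n s = \<bar>X n s\<bar> / c n" for n s
  have ym: "\<And>n. y n \<in> borel_measurable M" unfolding y_def using Xm by measurable
  have yint: "(\<integral>\<^sup>+ s. ennreal ((y n s)\<^sup>2) \<partial>M) = ennreal ((1/4)^n)" for n
  proof -
    have "(\<integral>\<^sup>+ s. ennreal ((y n s)\<^sup>2) \<partial>M) = (\<integral>\<^sup>+ s. ennreal (1/(c n)^2) * ennreal ((X n s)\<^sup>2) \<partial>M)"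
      unfolding y_def by (intro nn_integral_cong) (simp add: power_divide ennreal_mult' flip: ennreal_mult)
    also have "\<dots> = ennreal (1/(c n)^2) * ennreal (I n)"
      using Xm by (subst nn_integral_cmult) (auto simp: Ieq)
    also have "\<dots> = ennreal ((1/4)^n)"
      using cpos[of n] rpos[of n] I0[of n] unfolding c_def
      by (simp add: ennreal_mult'[symmetric] rI[symmetric] power_mult_distrib power_divide
          flip: power_mult ennreal_mult) (metis mult.commute power_mult num_double numeral_times_numeral power2_eq_square)
    finally show ?thesis .
  qed
  have ybig: "ennreal (2^n) < ?C (y n)" for n
  proof (rule ccontr)
    assume "\<not> ?thesis"
    then have le: "?C (y n) \<le> ennreal (2^n)" by simp
    have "?C (X n) \<le> ennreal (c n) * ?C (y n)"
      using cpos[of n] by (intro cal_mono[OF Xm ym]) (auto simp: y_def)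
    also have "\<dots> \<le> ennreal (c n) * ennreal (2^n)" using le by (intro mult_left_mono) auto
    also have "\<dots> = ennreal (4^n) * L2norm M (X n)"
      unfolding L2X c_def using rpos[of n]
      by (simp add: ennreal_mult'[symmetric] flip: ennreal_mult) (simp add: power_mult_distrib[symmetric])
    finally show False using X(3)[of n] by simp
  qed
  define T where "T s = (\<Sum>n. ennreal ((y n s)\<^sup>2))" for s
  have Tm: "T \<in> borel_measurable M" unfolding T_def using ym by measurable
  have "(\<integral>\<^sup>+ s. T s \<partial>M) = (\<Sum>n. ennreal ((1/4)^n))"
    unfolding T_def using ym by (subst nn_integral_suminf) (auto simp: yint)
  also have "\<dots> \<noteq> \<infinity>" unfolding infinity_ennreal_def by (rule ennreal_suminf_neq_top) (auto intro: summable_geometric)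
  finally have Tint: "(\<integral>\<^sup>+ s. T s \<partial>M) \<noteq> \<infinity>" .
  have Tfin: "AE s in M. T s \<noteq> \<infinity>" by (rule nn_integral_noteq_infinite[OF Tm Tint])
  define S where "S s = sqrt (enn2real (T s))" for s
  have Sm: "S \<in> borel_measurable M" unfolding S_def using Tm by measurable
  have "(\<integral>\<^sup>+ s. ennreal ((S s)\<^sup>2) \<partial>M) \<le> (\<integral>\<^sup>+ s. T s \<partial>M)"
    unfolding S_def by (intro nn_integral_mono) (simp add: ennreal_enn2real_if)
  also have "\<dots> < \<infinity>" using Tint by (simp add: top.not_eq_extremum)
  finally have "S \<in> kspace M (L2norm M)" by (intro kspace_L2I[OF Sm])
  then have "S \<in> kspace M ?C" using sub by auto
  then have Cfin: "?C S < \<infinity>" unfolding kspace_def by auto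
  have yS: "?C (y n) \<le> ?C S" for n
  proof -
    have "AE s in M. \<bar>y n s\<bar> \<le> 1 * \<bar>S s\<bar>"
      using Tfin
    proof eventually_elim
      case (elim s)
      have "ennreal ((y n s)\<^sup>2) \<le> T s" unfolding T_def by (rule ennreal_single_le_suminf)
      moreover have "T s = ennreal (enn2real (T s))" using elim by (simp add: ennreal_enn2real_if)
      ultimately have "ennreal ((y n s)\<^sup>2) \<le> ennreal (enn2real (T s))" by simp
      then have "(y n s)\<^sup>2 \<le> enn2real (T s)" by (simp add: ennreal_le_iff)
      then have "sqrt ((y n s)\<^sup>2) \<le> S s" unfolding S_def by (rule real_sqrt_le_mono)
      then show ?case by simp
    qed
    then have "?C (y n) \<le> ennreal 1 * ?C S" by (intro cal_mono[OF ym Sm]) auto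
    then show ?thesis by simp
  qed
  obtain R where R: "?C S = ennreal R" "0 \<le> R" using Cfin by (cases "?C S") auto
  obtain n :: nat where "R < 2^n" using real_arch_pow[of 2 R] by auto
  then have "?C S < ennreal (2^n)" using R by (simp add: ennreal_less_iff)
  with ybig[of n] yS[of n] show False by simp
qed



lemma pw_beta:
  fixes F U V B X l A m :: real
  assumes "0 \<le> l" "\<bar>F\<bar> \<le> l * \<bar>U\<bar> powr (1-\<theta>) * \<bar>V\<bar> powr \<theta>" "\<bar>V\<bar> powr \<theta> \<le> 2"
    "0 < A" "0 < m" "0 < \<theta>" "\<theta> < 1"
  shows "\<bar>F\<bar> * (\<bar>B\<bar> powr (1-\<theta>) * \<bar>X\<bar> powr (2*\<theta>))
     \<le> (2*l*A powr (1-\<theta>) * m powr \<theta> * (1-\<theta>) / A) * \<bar>U*B\<bar> + (2*l*A powr (1-\<theta>) * m powr \<theta> * \<theta> / m) * X\<^sup>2"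
proof -
  have xe: "\<bar>X\<bar> powr (2*\<theta>) = (X\<^sup>2) powr \<theta>"
    by (cases "X = 0") (auto simp: powr_powr[symmetric] powr_numeral)
  have ub: "\<bar>U\<bar> powr (1-\<theta>) * \<bar>B\<bar> powr (1-\<theta>) = \<bar>U*B\<bar> powr (1-\<theta>)"
    by (simp add: abs_mult powr_mult)
  have "\<bar>F\<bar> * (\<bar>B\<bar> powr (1-\<theta>) * \<bar>X\<bar> powr (2*\<theta>))
      \<le> (l * \<bar>U\<bar> powr (1-\<theta>) * \<bar>V\<bar> powr \<theta>) * (\<bar>B\<bar> powr (1-\<theta>) * \<bar>X\<bar> powr (2*\<theta>))"
    using assms by (intro mult_right_mono) auto
  also have "\<dots> \<le> (l * \<bar>U\<bar> powr (1-\<theta>) * 2) * (\<bar>B\<bar> powr (1-\<theta>) * \<bar>X\<bar> powr (2*\<theta>))"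
    using assms by (intro mult_right_mono mult_left_mono) auto
  also have "\<dots> = 2*l * ((\<bar>U\<bar> powr (1-\<theta>) * \<bar>B\<bar> powr (1-\<theta>)) * \<bar>X\<bar> powr (2*\<theta>))"
    by (simp add: mult_ac)
  also have "\<dots> = 2*l * (\<bar>U*B\<bar> powr (1-\<theta>) * (X\<^sup>2) powr \<theta>)"
    by (simp only: xe ub)
  also have "\<dots> \<le> 2*l * (A powr (1-\<theta>) * m powr \<theta> * ((1-\<theta>)*(\<bar>U*B\<bar>/A) + \<theta>*(X\<^sup>2/m)))"
    using assms by (intro mult_left_mono young_scaled) auto
  also have "\<dots> = (2*l*A powr (1-\<theta>) * m powr \<theta> * (1-\<theta>) / A) * \<bar>U*B\<bar> + (2*l*A powr (1-\<theta>) * m powr \<theta> * \<theta> / m) * X\<^sup>2"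
    by (simp add: field_simps)
  finally show ?thesis .
qed

lemma linf_bound:
  assumes "Linfnorm M v \<le> 1" "0 < \<theta>" "\<theta> < 1"
  shows "AE s in M. \<bar>v s\<bar> powr \<theta> \<le> 2"
proof -
  have "Linfnorm M v < 2" using assms(1) by (metis ennreal_less_iff ennreal_numeral le_less_trans numeral_One one_less_numeral_iff semiring_norm(76) zero_le_one ennreal_1)
  then have vm: "v \<in> borel_measurable M" and
    "Inf {ennreal c | c. 0 \<le> c \<and> (AE s in M. \<bar>v s\<bar> \<le> c)} < 2"
    unfolding Linfnorm_def by (auto split: if_splits)
  then obtain c where c: "0 \<le> c" "ennreal c < 2" "AE s in M. \<bar>v s\<bar> \<le> c"
    by (auto simp: Inf_less_iff)
  have c2: "c < 2" using c by (metis ennreal_less_iff ennreal_numeral zero_le_numeral)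
  from c(3) show ?thesis
  proof eventually_elim
    case (elim s)
    have "\<bar>v s\<bar> powr \<theta> \<le> 2 powr \<theta>" using elim c2 assms by (intro powr_mono2) auto
    also have "\<dots> \<le> 2 powr 1" using assms by (intro powr_mono) auto
    finally show ?case by simp
  qed
qed

lemma beta_bound:
  assumes th: "0 < \<theta>" "\<theta> < 1"
   and bm: "b \<in> borel_measurable M" "kdual M N b \<le> ennreal A" "0 < A"
   and xm: "x \<in> borel_measurable M" "(\<integral>\<^sup>+ s. ennreal ((x s)\<^sup>2) \<partial>M) \<le> ennreal m" "0 < m"
   and fm: "calderon M \<theta> N (Linfnorm M) f < ennreal t"
  shows "(\<integral>\<^sup>+ s. ennreal (\<bar>f s\<bar> * (\<bar>b s\<bar> powr (1-\<theta>) * \<bar>x s\<bar> powr (2*\<theta>))) \<partial>M)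
    \<le> ennreal (2 * t * A powr (1-\<theta>) * m powr \<theta>)"
proof -
  from cal_obtain[OF fm] obtain l u v where fmeas: "f \<in> borel_measurable M" and
    l: "0 \<le> l" "ennreal l < ennreal t" and uv: "u \<in> borel_measurable M" "v \<in> borel_measurable M"
    "N u \<le> 1" "Linfnorm M v \<le> 1" and fac: "AE s in M. \<bar>f s\<bar> \<le> l * \<bar>u s\<bar> powr (1 - \<theta>) * \<bar>v s\<bar> powr \<theta>"
    by blast
  have lt: "l < t" using l by (simp add: ennreal_less_iff)
  define K1 where "K1 = 2*l*A powr (1-\<theta>) * m powr \<theta> * (1-\<theta>) / A"
  define K2 where "K2 = 2*l*A powr (1-\<theta>) * m powr \<theta> * \<theta> / m"
  have K1: "0 \<le> K1" unfolding K1_def using l th bm xm by auto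
  have K2: "0 \<le> K2" unfolding K2_def using l th bm xm by auto
  have "(\<integral>\<^sup>+ s. ennreal (\<bar>f s\<bar> * (\<bar>b s\<bar> powr (1-\<theta>) * \<bar>x s\<bar> powr (2*\<theta>))) \<partial>M)
     \<le> (\<integral>\<^sup>+ s. ennreal K1 * ennreal \<bar>u s * b s\<bar> + ennreal K2 * ennreal ((x s)\<^sup>2) \<partial>M)"
  proof (rule nn_integral_mono_AE)
    show "AE s in M. ennreal (\<bar>f s\<bar> * (\<bar>b s\<bar> powr (1-\<theta>) * \<bar>x s\<bar> powr (2*\<theta>)))
       \<le> ennreal K1 * ennreal \<bar>u s * b s\<bar> + ennreal K2 * ennreal ((x s)\<^sup>2)"
      using fac linf_bound[OF uv(4) th]
    proof eventually_elim
      case (elim s)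
      have "\<bar>f s\<bar> * (\<bar>b s\<bar> powr (1-\<theta>) * \<bar>x s\<bar> powr (2*\<theta>)) \<le> K1 * \<bar>u s * b s\<bar> + K2 * (x s)\<^sup>2"
        unfolding K1_def K2_def using elim l th bm xm by (intro pw_beta) auto
      then have "ennreal (\<bar>f s\<bar> * (\<bar>b s\<bar> powr (1-\<theta>) * \<bar>x s\<bar> powr (2*\<theta>))) \<le> ennreal (K1 * \<bar>u s * b s\<bar> + K2 * (x s)\<^sup>2)"
        by (rule ennreal_leI)
      also have "\<dots> = ennreal K1 * ennreal \<bar>u s * b s\<bar> + ennreal K2 * ennreal ((x s)\<^sup>2)"
        using K1 K2 by (simp add: ennreal_mult)
      finally show ?case .
    qed
  qed
  also have "\<dots> = ennreal K1 * (\<integral>\<^sup>+ s. ennreal \<bar>u s * b s\<bar> \<partial>M) + ennreal K2 * (\<integral>\<^sup>+ s. ennreal ((x s)\<^sup>2) \<partial>M)"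
    using uv bm xm by (simp add: nn_integral_add nn_integral_cmult)
  also have "\<dots> \<le> ennreal K1 * ennreal A + ennreal K2 * ennreal m"
  proof (intro add_mono mult_left_mono)
    show "(\<integral>\<^sup>+ s. ennreal \<bar>u s * b s\<bar> \<partial>M) \<le> ennreal A"
      using kdual_ge[where NA=N, OF uv(1) bm(1) uv(3)] bm(2) by (rule order_trans)
  qed (use xm in auto)
  also have "\<dots> = ennreal (K1*A + K2*m)" using K1 K2 bm xm by (simp add: ennreal_mult)
  also have "K1*A + K2*m = 2*l*A powr (1-\<theta>) * m powr \<theta>"
    unfolding K1_def K2_def using bm xm by (simp add: field_simps)
  also have "\<dots> \<le> ennreal (2 * t * A powr (1-\<theta>) * m powr \<theta>)"
    using lt l by (intro ennreal_leI mult_right_mono) auto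
  finally show ?thesis .
qed



lemma pw_sq:
  fixes X l p q :: real
  assumes "0 \<le> l" "\<bar>X\<bar> \<le> l * \<bar>p\<bar> powr (1 - 1/2) * \<bar>q\<bar> powr (1/2)"
  shows "X\<^sup>2 \<le> l\<^sup>2 * \<bar>p * q\<bar>"
proof -
  have "X\<^sup>2 = \<bar>X\<bar>\<^sup>2" by simp
  also have "\<dots> \<le> (l * sqrt \<bar>p\<bar> * sqrt \<bar>q\<bar>)\<^sup>2"
    using assms by (intro power_mono) (auto simp: powr_half_sqrt)
  also have "\<dots> = l\<^sup>2 * \<bar>p * q\<bar>" by (simp add: power_mult_distrib abs_mult)
  finally show ?thesis .
qed

lemma pw_part1:
  fixes X l p q K :: real
  assumes "0 \<le> l" "0 < K" "0 < \<theta>" "\<theta> < 1"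
    "\<bar>X\<bar> \<le> l * \<bar>p\<bar> powr (1 - 1/2) * \<bar>q\<bar> powr (1/2)"
  shows "\<bar>X\<bar> \<le> (l powr (1-\<theta>) * sqrt K) * \<bar>\<bar>p\<bar> powr (1-\<theta>)\<bar> powr (1 - 1/2) *
     \<bar>\<bar>q\<bar> powr (1-\<theta>) * \<bar>X\<bar> powr (2*\<theta>) / K\<bar> powr (1/2)"
proof (cases "X = 0")
  case True then show ?thesis using assms by simp
next
  case False
  then have l: "0 < l" and p: "p \<noteq> 0" and q: "q \<noteq> 0" using assms(1,5)
    by (auto simp: less_le)
  have h: "ln \<bar>X\<bar> \<le> ln l + ln \<bar>p\<bar>/2 + ln \<bar>q\<bar>/2"
  proof -
    have "ln \<bar>X\<bar> \<le> ln (l * \<bar>p\<bar> powr (1 - 1/2) * \<bar>q\<bar> powr (1/2))"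
      using assms(5) False by (subst ln_le_cancel_iff) auto
    also have "\<dots> = ln l + ln \<bar>p\<bar>/2 + ln \<bar>q\<bar>/2" using l p q by (simp add: ln_mult ln_powr)
    finally show ?thesis .
  qed
  have "ln (l powr (1-\<theta>) * sqrt K * \<bar>\<bar>p\<bar> powr (1-\<theta>)\<bar> powr (1 - 1/2) *
     \<bar>\<bar>q\<bar> powr (1-\<theta>) * \<bar>X\<bar> powr (2*\<theta>) / K\<bar> powr (1/2))
     = (1-\<theta>) * ln l + ln K / 2 + (1-\<theta>) * ln \<bar>p\<bar> / 2 + ((1-\<theta>) * ln \<bar>q\<bar> + 2*\<theta>*ln \<bar>X\<bar> - ln K)/2"
    using l p q False assms(2) by (simp add: ln_mult ln_powr ln_div ln_sqrt)
  also have "\<dots> \<ge> ln \<bar>X\<bar>" using h assms(3,4)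
  proof -
    have "(1-\<theta>) * ln \<bar>X\<bar> \<le> (1-\<theta>) * (ln l + ln \<bar>p\<bar>/2 + ln \<bar>q\<bar>/2)"
      using h assms(4) by (intro mult_left_mono) auto
    then show ?thesis by (simp add: algebra_simps add_divide_distrib diff_divide_distrib)
  qed
  finally show ?thesis using False l p q assms(2)
    by (subst (asm) ln_le_cancel_iff) auto
qed



lemma Linf_one: "Linfnorm M (\<lambda>s. 1) \<le> 1"
  unfolding Linfnorm_def by (auto intro!: Inf_lower exI[of _ 1])

lemma cal_dual_L2:
  assumes "calderon M (1/2) NA (kdual M NA) x < \<infinity>"
  shows "x \<in> kspace M (L2norm M)"
proof -
  from cal_obtain[OF assms] obtain l a b where xm: "x \<in> borel_measurable M" and
    l: "0 \<le> l" and ab: "a \<in> borel_measurable M" "b \<in> borel_measurable M" "NA a \<le> 1" "kdual M NA b \<le> 1"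
    and f: "AE s in M. \<bar>x s\<bar> \<le> l * \<bar>a s\<bar> powr (1 - 1/2) * \<bar>b s\<bar> powr (1/2)" by blast
  have "(\<integral>\<^sup>+ s. ennreal ((x s)\<^sup>2) \<partial>M) \<le> (\<integral>\<^sup>+ s. ennreal (l\<^sup>2) * ennreal \<bar>a s * b s\<bar> \<partial>M)"
    using f by (intro nn_integral_mono_AE) (auto elim!: eventually_mono simp flip: ennreal_mult intro!: ennreal_leI pw_sq[OF l])
  also have "\<dots> = ennreal (l\<^sup>2) * (\<integral>\<^sup>+ s. ennreal \<bar>a s * b s\<bar> \<partial>M)"
    using ab by (simp add: nn_integral_cmult)
  also have "\<dots> \<le> ennreal (l\<^sup>2) * 1"
    using kdual_ge[where NA=NA, OF ab(1,2,3)] ab(4) by (intro mult_left_mono) auto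
  also have "\<dots> < \<infinity>" by simp
  finally show ?thesis by (rule kspace_L2I[OF xm])
qed

lemma part1:
  assumes kN: "koethe M N"
    and h3: "kspace M (calderon M (1/2) N (kdual M N)) = kspace M (L2norm M)"
    and th: "0 < \<theta>" "\<theta> < 1"
  shows "kspace M (calderon M (1/2) (calderon M \<theta> N (Linfnorm M))
                     (kdual M (calderon M \<theta> N (Linfnorm M)))) = kspace M (L2norm M)"
proof
  let ?Nt = "calderon M \<theta> N (Linfnorm M)"
  show "kspace M (calderon M (1/2) ?Nt (kdual M ?Nt)) \<subseteq> kspace M (L2norm M)"
  proof
    fix x assume "x \<in> kspace M (calderon M (1/2) ?Nt (kdual M ?Nt))"
    then have "calderon M (1/2) ?Nt (kdual M ?Nt) x < \<infinity>" unfolding kspace_def by auto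
    then show "x \<in> kspace M (L2norm M)" by (rule cal_dual_L2)
  qed
  show "kspace M (L2norm M) \<subseteq> kspace M (calderon M (1/2) ?Nt (kdual M ?Nt))"
  proof
    fix x assume xL: "x \<in> kspace M (L2norm M)"
    then have "calderon M (1/2) N (kdual M N) x < \<infinity>" using h3 unfolding kspace_def by auto
    from cal_obtain[OF this] obtain l a b where xm: "x \<in> borel_measurable M" and
      l: "0 \<le> l" and ab: "a \<in> borel_measurable M" "b \<in> borel_measurable M" "N a \<le> 1" "kdual M N b \<le> 1"
      and f: "AE s in M. \<bar>x s\<bar> \<le> l * \<bar>a s\<bar> powr (1 - 1/2) * \<bar>b s\<bar> powr (1/2)" by blast
    define m where "m = enn2real (\<integral>\<^sup>+ s. ennreal ((x s)\<^sup>2) \<partial>M) + 1"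
    have m0: "0 < m" unfolding m_def by (simp add: add_nonneg_pos)
    have "(\<integral>\<^sup>+ s. ennreal ((x s)\<^sup>2) \<partial>M) = ennreal (enn2real (\<integral>\<^sup>+ s. ennreal ((x s)\<^sup>2) \<partial>M))"
      using L2norm_fin(2)[OF xL] by (simp add: ennreal_enn2real_if)
    also have "\<dots> \<le> ennreal m" unfolding m_def by (intro ennreal_leI) simp
    finally have m: "0 < m" "(\<integral>\<^sup>+ s. ennreal ((x s)\<^sup>2) \<partial>M) \<le> ennreal m" using m0 by auto
    define K where "K = 2 * 2 * 1 powr (1-\<theta>) * m powr \<theta>"
    have K: "0 < K" unfolding K_def using m by simp
    define al where "al s = \<bar>a s\<bar> powr (1-\<theta>)" for s
    define be where "be s = \<bar>b s\<bar> powr (1-\<theta>) * \<bar>x s\<bar> powr (2*\<theta>) / K" for s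
    have alm: "al \<in> borel_measurable M" unfolding al_def using ab by measurable
    have bem: "be \<in> borel_measurable M" unfolding be_def using ab xm by measurable
    have al1: "?Nt al \<le> 1"
      using cal_le[where NA=N and NB="Linfnorm M" and \<theta>=\<theta> and l=1 and a=a and b="\<lambda>s. 1",
          OF alm _ ab(1) _ ab(3) Linf_one] by (auto simp: al_def)
    have be1: "kdual M ?Nt be \<le> 1"
    proof (rule kdual_leI[OF bem])
      fix g assume gm: "g \<in> borel_measurable M" and g1: "?Nt g \<le> 1"
      have g2: "?Nt g < ennreal 2" using g1 by (rule le_less_trans) simp
      have "(\<integral>\<^sup>+ s. ennreal \<bar>g s * be s\<bar> \<partial>M) =
         (\<integral>\<^sup>+ s. ennreal (1/K) * ennreal (\<bar>g s\<bar> * (\<bar>b s\<bar> powr (1-\<theta>) * \<bar>x s\<bar> powr (2*\<theta>))) \<partial>M)"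
        using K by (intro nn_integral_cong) (simp add: be_def abs_mult flip: ennreal_mult)
      also have "\<dots> = ennreal (1/K) * (\<integral>\<^sup>+ s. ennreal (\<bar>g s\<bar> * (\<bar>b s\<bar> powr (1-\<theta>) * \<bar>x s\<bar> powr (2*\<theta>))) \<partial>M)"
      proof (intro nn_integral_cmult)
        have hm: "(\<lambda>s. \<bar>b s\<bar> powr (1-\<theta>) * \<bar>x s\<bar> powr (2*\<theta>)) \<in> borel_measurable M"
          using ab(2) xm by measurable
        show "(\<lambda>s. ennreal (\<bar>g s\<bar> * (\<bar>b s\<bar> powr (1-\<theta>) * \<bar>x s\<bar> powr (2*\<theta>)))) \<in> borel_measurable M"
          using gm hm by measurable
      qed
      also have "\<dots> \<le> ennreal (1/K) * ennreal K"
        unfolding K_def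
        by (intro mult_left_mono beta_bound[OF th ab(2) _ _ xm m(2) m(1) g2]) (use ab in auto)
      also have "\<dots> = 1" using K by (simp flip: ennreal_mult)
      finally show "(\<integral>\<^sup>+ s. ennreal \<bar>g s * be s\<bar> \<partial>M) \<le> 1" .
    qed
    have "AE s in M. \<bar>x s\<bar> \<le> (l powr (1-\<theta>) * sqrt K) * \<bar>al s\<bar> powr (1 - 1/2) * \<bar>be s\<bar> powr (1/2)"
      using f
    proof eventually_elim
      case (elim s)
      show ?case unfolding al_def be_def by (rule pw_part1[OF l K th elim])
    qed
    then have "calderon M (1/2) ?Nt (kdual M ?Nt) x \<le> ennreal (l powr (1-\<theta>) * sqrt K)"
      using cal_le[where M=M and x=x and \<theta>="1/2" and NA="?Nt" and NB="kdual M ?Nt" and a=al and b=be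
         and l="l powr (1-\<theta>) * sqrt K", OF xm _ alm bem al1 be1] K by auto
    then show "x \<in> kspace M (calderon M (1/2) ?Nt (kdual M ?Nt))"
      unfolding kspace_def using xm by (auto simp: le_less_trans)
  qed
qed



lemma pw_main:
  fixes X a b a' b' n :: real
  assumes X: "X \<noteq> 0" and f1: "\<bar>X\<bar> = \<bar>a\<bar> powr (1 - 1/2) * \<bar>b\<bar> powr (1/2)"
    and f2: "\<bar>X\<bar> = \<bar>a'\<bar> powr (1 - 1/2) * \<bar>b'\<bar> powr (1/2)" and n: "0 < n"
  shows "(X * ln (\<bar>b'\<bar> / \<bar>a'\<bar>) - (1-\<theta>) * (X * ln (\<bar>b\<bar> / \<bar>a\<bar>)) - \<theta> * (2 * X * ln (\<bar>X\<bar> / n)))\<^sup>2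
     \<le> 16 * (\<bar>b'\<bar> * (\<bar>a\<bar> powr (1-\<theta>) * n powr \<theta>) + \<bar>a'\<bar> * (\<bar>b\<bar> powr (1-\<theta>) * \<bar>X\<bar> powr (2*\<theta>) * n powr (-\<theta>)))"
proof -
  have nz: "a \<noteq> 0" "b \<noteq> 0" "a' \<noteq> 0" "b' \<noteq> 0" using X f1 f2 by auto
  define la where "la = ln \<bar>a\<bar>"
  define la' where "la' = ln \<bar>a'\<bar>"
  define lx where "lx = ln \<bar>X\<bar>"
  define ln' where "ln' = ln n"
  have r1: "ln \<bar>b\<bar> = 2*lx - la"
  proof -
    have "lx = ln (\<bar>a\<bar> powr (1 - 1/2) * \<bar>b\<bar> powr (1/2))" unfolding lx_def using f1 by simp
    also have "\<dots> = la/2 + ln \<bar>b\<bar>/2" unfolding la_def using nz by (simp add: ln_mult ln_powr)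
    finally show ?thesis by simp
  qed
  have r2: "ln \<bar>b'\<bar> = 2*lx - la'"
  proof -
    have "lx = ln (\<bar>a'\<bar> powr (1 - 1/2) * \<bar>b'\<bar> powr (1/2))" unfolding lx_def using f2 by simp
    also have "\<dots> = la'/2 + ln \<bar>b'\<bar>/2" unfolding la'_def using nz by (simp add: ln_mult ln_powr)
    finally show ?thesis by simp
  qed
  define w where "w = (2*lx - la') - la' - (1-\<theta>) * ((2*lx - la) - la) - 2*\<theta>*(lx - ln')"
  have D: "X * ln (\<bar>b'\<bar> / \<bar>a'\<bar>) - (1-\<theta>) * (X * ln (\<bar>b\<bar> / \<bar>a\<bar>)) - \<theta> * (2 * X * ln (\<bar>X\<bar> / n)) = X * w"
    using nz X n unfolding w_def by (simp add: ln_div r1 r2 la_def[symmetric] la'_def[symmetric] lx_def[symmetric] ln'_def[symmetric] algebra_simps)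
  have X2: "X\<^sup>2 = exp (2*lx)" unfolding lx_def using X
  proof -
    have "exp (ln \<bar>X\<bar>) = \<bar>X\<bar>" using X by simp
    then have "exp (2 * ln \<bar>X\<bar>) = \<bar>X\<bar> * \<bar>X\<bar>" by (metis exp_add mult_2)
    then show "X\<^sup>2 = exp (2 * ln \<bar>X\<bar>)" by (simp add: power2_eq_square)
  qed
  have e1: "\<bar>b'\<bar> * (\<bar>a\<bar> powr (1-\<theta>) * n powr \<theta>) = X\<^sup>2 * exp (w/2)"
  proof -
    have "\<bar>b'\<bar> * (\<bar>a\<bar> powr (1-\<theta>) * n powr \<theta>) = exp (ln \<bar>b'\<bar> + (1-\<theta>)*la + \<theta>*ln')"
      using nz n unfolding la_def ln'_def by (simp add: powr_def exp_add)
    also have "\<dots> = exp (2*lx + w/2)" unfolding r2 w_def by (simp add: field_simps)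
    finally show ?thesis by (simp add: X2 exp_add)
  qed
  have e2: "\<bar>a'\<bar> * (\<bar>b\<bar> powr (1-\<theta>) * \<bar>X\<bar> powr (2*\<theta>) * n powr (-\<theta>)) = X\<^sup>2 * exp (-(w/2))"
  proof -
    have "\<bar>a'\<bar> * (\<bar>b\<bar> powr (1-\<theta>) * \<bar>X\<bar> powr (2*\<theta>) * n powr (-\<theta>)) = exp (la' + (1-\<theta>)*ln \<bar>b\<bar> + 2*\<theta>*lx - \<theta>*ln')"
      using nz n X unfolding la'_def lx_def ln'_def by (simp add: powr_def exp_add exp_diff exp_minus field_simps)
    also have "\<dots> = exp (2*lx - w/2)" unfolding r1 w_def by (simp add: field_simps)
    also have "\<dots> = exp (2*lx) * exp (-(w/2))" by (simp flip: exp_add)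
    finally show ?thesis by (simp only: X2)
  qed
  have "(X * w)\<^sup>2 = X\<^sup>2 * (4 * (w/2)\<^sup>2)" by (simp add: power2_eq_square)
  also have "\<dots> \<le> X\<^sup>2 * (4 * (4 * (exp (w/2) + exp (-(w/2)))))"
    by (intro mult_left_mono exp_sq_bound) auto
  also have "\<dots> = 16 * (X\<^sup>2 * exp (w/2) + X\<^sup>2 * exp (-(w/2)))" by (simp add: algebra_simps)
  finally show ?thesis unfolding D e1 e2 .
qed



lemma koethe_hom: "koethe M N \<Longrightarrow> f \<in> borel_measurable M \<Longrightarrow> N (\<lambda>s. c * f s) = ennreal \<bar>c\<bar> * N f"
  unfolding koethe_def by blast

lemma ennreal_bound_mult:
  assumes "X \<le> ennreal K * ennreal n" "0 \<le> n"
  shows "X \<le> ennreal (max K 1 * n)"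
proof -
  have "ennreal K * ennreal n \<le> ennreal (max K 1) * ennreal n" by (intro mult_right_mono ennreal_leI) auto
  also have "\<dots> = ennreal (max K 1 * n)" using assms by (simp add: ennreal_mult)
  finally show ?thesis using assms by simp
qed

lemma ennreal_bound_mult2:
  assumes "X \<le> ennreal C * Y" "Y \<le> ennreal m" "0 \<le> m"
  shows "X \<le> ennreal (max C 1 * m)"
proof -
  have "ennreal C * Y \<le> ennreal (max C 1) * ennreal m" by (intro mult_mono ennreal_leI assms) auto
  also have "\<dots> = ennreal (max C 1 * m)" using assms by (simp add: ennreal_mult)
  finally show ?thesis using assms by simp
qed

theorem mainTheorem9:
  fixes M :: "'a measure" and N :: "('a \<Rightarrow> real) \<Rightarrow> ennreal" and \<theta> :: real
  assumes "sigma_finite_measure M"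
    and "koethe M N"
    and "kspace M (calderon M (1/2) N (kdual M N)) = kspace M (L2norm M)"
    and "0 < \<theta>" and "\<theta> < 1"
  shows "kspace M (calderon M (1/2) (calderon M \<theta> N (Linfnorm M))
                     (kdual M (calderon M \<theta> N (Linfnorm M)))) = kspace M (L2norm M)
     \<and> (\<forall>C a b C' a' b'.
          almost_opt_fact M (1/2) N (kdual M N) C a b \<longrightarrow>
          almost_opt_fact M (1/2) (calderon M \<theta> N (Linfnorm M))
                                  (kdual M (calderon M \<theta> N (Linfnorm M))) C' a' b' \<longrightarrow>
          (\<exists>K::real. \<forall>x\<in>kspace M (L2norm M).
              L2norm M (\<lambda>s. differential a' b' x s - (1 - \<theta>) * differential a b x s
                             - \<theta> * KP2 M x s)
              \<le> ennreal K * L2norm M x))"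
proof -
  note kN = assms(2) and h3 = assms(3) and th = assms(4,5)
  let ?Nt = "calderon M \<theta> N (Linfnorm M)"
  let ?C1 = "calderon M (1/2) N (kdual M N)"
  let ?C2 = "calderon M (1/2) ?Nt (kdual M ?Nt)"
  have P1: "kspace M ?C2 = kspace M (L2norm M)" by (rule part1[OF kN h3 th])
  moreover have "\<forall>C a b C' a' b'.
          almost_opt_fact M (1/2) N (kdual M N) C a b \<longrightarrow>
          almost_opt_fact M (1/2) ?Nt (kdual M ?Nt) C' a' b' \<longrightarrow>
          (\<exists>K::real. \<forall>x\<in>kspace M (L2norm M).
              L2norm M (\<lambda>s. differential a' b' x s - (1 - \<theta>) * differential a b x s
                             - \<theta> * KP2 M x s)
              \<le> ennreal K * L2norm M x)"
  proof (intro allI impI)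
    fix C a b C' a' b'
    assume O1: "almost_opt_fact M (1/2) N (kdual M N) C a b"
      and O2: "almost_opt_fact M (1/2) ?Nt (kdual M ?Nt) C' a' b'"
    obtain K1 where K1: "\<forall>x\<in>kspace M (L2norm M). 0 < L2norm M x \<longrightarrow> ?C1 x \<le> ennreal K1 * L2norm M x"
      using cal_bound[of M "1/2" N "kdual M N"] h3 by auto
    obtain K2 where K2: "\<forall>x\<in>kspace M (L2norm M). 0 < L2norm M x \<longrightarrow> ?C2 x \<le> ennreal K2 * L2norm M x"
      using cal_bound[of M "1/2" ?Nt "kdual M ?Nt"] P1 by auto
    define cA where "cA = max C 1 * max K1 1"
    define cB where "cB = max C' 1 * max K2 1"
    have cA: "0 < cA" unfolding cA_def by (simp add: mult_pos_pos)
    have cB: "0 < cB" unfolding cB_def by (simp add: mult_pos_pos)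
    define Kc where "Kc = sqrt (80 * cA powr (1-\<theta>) * cB)"
    show "\<exists>K::real. \<forall>x\<in>kspace M (L2norm M).
              L2norm M (\<lambda>s. differential a' b' x s - (1 - \<theta>) * differential a b x s
                             - \<theta> * KP2 M x s)
              \<le> ennreal K * L2norm M x"
    proof (intro exI ballI)
      fix x assume xL: "x \<in> kspace M (L2norm M)"
      define I where "I = enn2real (\<integral>\<^sup>+ s. ennreal ((x s)\<^sup>2) \<partial>M)"
      define n where "n = sqrt I"
      have xm: "x \<in> borel_measurable M" using L2norm_fin(1)[OF xL] .
      have Ieq: "(\<integral>\<^sup>+ s. ennreal ((x s)\<^sup>2) \<partial>M) = ennreal I"
        using L2norm_fin(2)[OF xL] unfolding I_def by (simp add: ennreal_enn2real_if)
      have I0: "0 \<le> I" unfolding I_def by simp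
      have n0: "0 \<le> n" unfolding n_def using I0 by simp
      have nI: "n\<^sup>2 = I" unfolding n_def using I0 by simp
      have L2x: "L2norm M x = ennreal n" using L2norm_fin(3)[OF xL] unfolding n_def I_def by simp
      have x1: "x \<in> kspace M ?C1" using xL h3 by simp
      have x2: "x \<in> kspace M ?C2" using xL P1 by simp
      from O1 x1 have am: "a x \<in> borel_measurable M" and bm: "b x \<in> borel_measurable M"
        and f1: "AE s in M. \<bar>x s\<bar> = \<bar>a x s\<bar> powr (1 - 1/2) * \<bar>b x s\<bar> powr (1/2)"
        and Na: "N (a x) \<le> ennreal C * ?C1 x" and Nb: "kdual M N (b x) \<le> ennreal C * ?C1 x"
        unfolding almost_opt_fact_def by blast+
      from O2 x2 have am': "a' x \<in> borel_measurable M" and bm': "b' x \<in> borel_measurable M"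
        and f2: "AE s in M. \<bar>x s\<bar> = \<bar>a' x s\<bar> powr (1 - 1/2) * \<bar>b' x s\<bar> powr (1/2)"
        and Na': "?Nt (a' x) \<le> ennreal C' * ?C2 x" and Nb': "kdual M ?Nt (b' x) \<le> ennreal C' * ?C2 x"
        unfolding almost_opt_fact_def by blast+
      define Dfun where "Dfun = (\<lambda>s. differential a' b' x s - (1 - \<theta>) * differential a b x s - \<theta> * KP2 M x s)"
      have Dm: "Dfun \<in> borel_measurable M"
        unfolding Dfun_def differential_def KP2_def using xm am bm am' bm' by measurable
      have "L2norm M Dfun \<le> ennreal Kc * L2norm M x"
      proof (cases "n = 0")
        case True
        then have "(\<integral>\<^sup>+ s. ennreal ((x s)\<^sup>2) \<partial>M) = 0" using Ieq nI by simp
        then have "AE s in M. ennreal ((x s)\<^sup>2) = 0" using xm by (subst (asm) nn_integral_0_iff_AE) auto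
        then have "AE s in M. x s = 0" by (auto elim!: eventually_mono)
        then have "AE s in M. ennreal ((Dfun s)\<^sup>2) = 0"
          by (auto elim!: eventually_mono simp: Dfun_def differential_def KP2_def)
        then have "(\<integral>\<^sup>+ s. ennreal ((Dfun s)\<^sup>2) \<partial>M) = 0" using Dm by (subst nn_integral_0_iff_AE) auto
        then have "L2norm M Dfun = 0" using Dm unfolding L2norm_def by (simp add: Let_def)
        then show ?thesis by simp
      next
        case False
        then have n: "0 < n" using n0 by simp
        have Lpos: "0 < L2norm M x" using n L2x by simp
        define A where "A = cA * n"
        define B where "B = cB * n"
        have A: "0 < A" unfolding A_def using cA n by simp
        have B: "0 < B" unfolding B_def using cB n by simp
        have C1x: "?C1 x \<le> ennreal (max K1 1 * n)"
          using K1 xL Lpos L2x n0 by (intro ennreal_bound_mult) auto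
        have C2x: "?C2 x \<le> ennreal (max K2 1 * n)"
          using K2 xL Lpos L2x n0 by (intro ennreal_bound_mult) auto
        have NaA: "N (a x) \<le> ennreal A" unfolding A_def cA_def using ennreal_bound_mult2[OF Na C1x] n0
          by (simp add: mult.assoc)
        have NbA: "kdual M N (b x) \<le> ennreal A" unfolding A_def cA_def using ennreal_bound_mult2[OF Nb C1x] n0
          by (simp add: mult.assoc)
        have NaB: "?Nt (a' x) \<le> ennreal B" unfolding B_def cB_def using ennreal_bound_mult2[OF Na' C2x] n0
          by (simp add: mult.assoc)
        have NbB: "kdual M ?Nt (b' x) \<le> ennreal B" unfolding B_def cB_def using ennreal_bound_mult2[OF Nb' C2x] n0
          by (simp add: mult.assoc)
        define a0 where "a0 = (\<lambda>s. (1/A) * a x s)"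
        have a0m: "a0 \<in> borel_measurable M" unfolding a0_def using am by measurable
        have Na0: "N a0 \<le> 1"
        proof -
          have "N a0 = ennreal \<bar>1/A\<bar> * N (a x)" unfolding a0_def by (rule koethe_hom[OF kN am])
          also have "\<dots> = ennreal (1/A) * N (a x)" using A by simp
          also have "\<dots> \<le> ennreal (1/A) * ennreal A" using NaA by (intro mult_left_mono) auto
          also have "\<dots> = 1" using A by (simp flip: ennreal_mult)
          finally show ?thesis .
        qed
        define al0 where "al0 s = \<bar>a0 s\<bar> powr (1-\<theta>)" for s
        have al0m: "al0 \<in> borel_measurable M" unfolding al0_def using a0m by measurable
        have Nal0: "?Nt al0 \<le> 1"
          using cal_le[where NA=N and NB="Linfnorm M" and \<theta>=\<theta> and l=1 and a=a0 and b="\<lambda>s. 1",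
              OF al0m _ a0m _ Na0 Linf_one] by (auto simp: al0_def)
        define E where "E = A powr (1-\<theta>) * n powr \<theta> * B"
        have E0: "0 \<le> E" unfolding E_def using A B by simp
        define t1 where "t1 s = \<bar>b' x s\<bar> * (\<bar>a x s\<bar> powr (1-\<theta>) * n powr \<theta>)" for s
        define t2 where "t2 s = \<bar>a' x s\<bar> * (\<bar>b x s\<bar> powr (1-\<theta>) * \<bar>x s\<bar> powr (2*\<theta>) * n powr (-\<theta>))" for s
        have t1m: "t1 \<in> borel_measurable M" unfolding t1_def using am bm' by measurable
        have t2m: "t2 \<in> borel_measurable M" unfolding t2_def using am' bm xm by measurable
        have T1: "(\<integral>\<^sup>+ s. ennreal (t1 s) \<partial>M) \<le> ennreal E"
        proof -
          have "(\<integral>\<^sup>+ s. ennreal (t1 s) \<partial>M) = (\<integral>\<^sup>+ s. ennreal (A powr (1-\<theta>) * n powr \<theta>) * ennreal \<bar>al0 s * b' x s\<bar> \<partial>M)"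
          proof (intro nn_integral_cong)
            fix s
            have "\<bar>a x s\<bar> = A * \<bar>a0 s\<bar>" unfolding a0_def using A by (simp add: abs_mult)
            then have "\<bar>a x s\<bar> powr (1-\<theta>) = A powr (1-\<theta>) * al0 s" unfolding al0_def using A
              by (simp add: powr_mult)
            then show "ennreal (t1 s) = ennreal (A powr (1-\<theta>) * n powr \<theta>) * ennreal \<bar>al0 s * b' x s\<bar>"
              unfolding t1_def al0_def by (simp add: abs_mult mult_ac flip: ennreal_mult)
          qed
          also have "\<dots> = ennreal (A powr (1-\<theta>) * n powr \<theta>) * (\<integral>\<^sup>+ s. ennreal \<bar>al0 s * b' x s\<bar> \<partial>M)"
            using al0m bm' by (intro nn_integral_cmult) measurable
          also have "\<dots> \<le> ennreal (A powr (1-\<theta>) * n powr \<theta>) * ennreal B"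
            using kdual_ge[where NA="?Nt", OF al0m bm' Nal0] NbB by (intro mult_left_mono) auto
          also have "\<dots> = ennreal E" unfolding E_def using B by (simp flip: ennreal_mult)
          finally show ?thesis .
        qed
        have T2: "(\<integral>\<^sup>+ s. ennreal (t2 s) \<partial>M) \<le> ennreal (4 * E)"
        proof -
          have "(\<integral>\<^sup>+ s. ennreal (t2 s) \<partial>M) = (\<integral>\<^sup>+ s. ennreal (n powr (-\<theta>)) * ennreal (\<bar>a' x s\<bar> * (\<bar>b x s\<bar> powr (1-\<theta>) * \<bar>x s\<bar> powr (2*\<theta>))) \<partial>M)"
            unfolding t2_def by (intro nn_integral_cong) (simp add: mult_ac flip: ennreal_mult)
          also have "\<dots> = ennreal (n powr (-\<theta>)) * (\<integral>\<^sup>+ s. ennreal (\<bar>a' x s\<bar> * (\<bar>b x s\<bar> powr (1-\<theta>) * \<bar>x s\<bar> powr (2*\<theta>))) \<partial>M)"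
          proof (intro nn_integral_cmult)
            have hm: "(\<lambda>s. \<bar>b x s\<bar> powr (1-\<theta>) * \<bar>x s\<bar> powr (2*\<theta>)) \<in> borel_measurable M"
              using bm xm by measurable
            show "(\<lambda>s. ennreal (\<bar>a' x s\<bar> * (\<bar>b x s\<bar> powr (1-\<theta>) * \<bar>x s\<bar> powr (2*\<theta>)))) \<in> borel_measurable M"
              using am' hm by measurable
          qed
          also have "\<dots> \<le> ennreal (n powr (-\<theta>)) * ennreal (2 * (2*B) * A powr (1-\<theta>) * (n\<^sup>2) powr \<theta>)"
          proof (intro mult_left_mono beta_bound[OF th bm NbA A xm])
            show "(\<integral>\<^sup>+ s. ennreal ((x s)\<^sup>2) \<partial>M) \<le> ennreal (n\<^sup>2)" using Ieq nI by simp
            show "0 < n\<^sup>2" using n by simp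
            have "ennreal B < ennreal (2*B)" using B by (simp add: ennreal_less_iff)
            then show "?Nt (a' x) < ennreal (2*B)" using NaB by (meson le_less_trans)
          qed simp
          also have "\<dots> = ennreal (4 * E)"
          proof -
            have "(n\<^sup>2) powr \<theta> = n powr \<theta> * n powr \<theta>"
              using n by (simp add: powr_powr[symmetric] powr_numeral flip: powr_add) 
            then have eq: "n powr (-\<theta>) * (2 * (2*B) * A powr (1-\<theta>) * (n\<^sup>2) powr \<theta>) = 4 * E"
              unfolding E_def using n by (simp add: powr_minus field_simps)
            have "ennreal (n powr (-\<theta>)) * ennreal (2 * (2*B) * A powr (1-\<theta>) * (n\<^sup>2) powr \<theta>) =
               ennreal (n powr (-\<theta>) * (2 * (2*B) * A powr (1-\<theta>) * (n\<^sup>2) powr \<theta>))"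
              using B A by (intro ennreal_mult[symmetric]) auto
            then show ?thesis by (simp only: eq)
          qed
          finally show ?thesis .
        qed
        have PW: "AE s in M. ennreal ((Dfun s)\<^sup>2) \<le> ennreal 16 * (ennreal (t1 s) + ennreal (t2 s))"
          using f1 f2
        proof eventually_elim
          case (elim s)
          have t1p: "0 \<le> t1 s" unfolding t1_def by simp
          have t2p: "0 \<le> t2 s" unfolding t2_def by simp
          have "(Dfun s)\<^sup>2 \<le> 16 * (t1 s + t2 s)"
          proof (cases "x s = 0")
            case True then show ?thesis using t1p t2p by (simp add: Dfun_def differential_def KP2_def)
          next
            case False
            have "Dfun s = x s * ln (\<bar>b' x s\<bar> / \<bar>a' x s\<bar>) - (1-\<theta>) * (x s * ln (\<bar>b x s\<bar> / \<bar>a x s\<bar>)) - \<theta> * (2 * x s * ln (\<bar>x s\<bar> / n))"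
              using False L2x n0 by (simp add: Dfun_def differential_def KP2_def)
            then show ?thesis unfolding t1_def t2_def using pw_main[OF False elim(1) elim(2) n] by simp
          qed
          then have "ennreal ((Dfun s)\<^sup>2) \<le> ennreal (16 * (t1 s + t2 s))" by (rule ennreal_leI)
          also have "\<dots> = ennreal 16 * (ennreal (t1 s) + ennreal (t2 s))" using t1p t2p by (simp add: ennreal_mult)
          finally show ?case .
        qed
        have "(\<integral>\<^sup>+ s. ennreal ((Dfun s)\<^sup>2) \<partial>M) \<le> (\<integral>\<^sup>+ s. ennreal 16 * (ennreal (t1 s) + ennreal (t2 s)) \<partial>M)"
          by (rule nn_integral_mono_AE[OF PW])
        also have "\<dots> = ennreal 16 * ((\<integral>\<^sup>+ s. ennreal (t1 s) \<partial>M) + (\<integral>\<^sup>+ s. ennreal (t2 s) \<partial>M))"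
          using t1m t2m by (simp add: nn_integral_cmult nn_integral_add)
        also have "\<dots> \<le> ennreal 16 * (ennreal E + ennreal (4*E))"
          by (intro mult_left_mono add_mono T1 T2) auto
        also have "\<dots> = ennreal (80 * E)" using E0 ennreal_mult[of 16 "5*E"] by (simp flip: ennreal_plus)
        finally have DI: "(\<integral>\<^sup>+ s. ennreal ((Dfun s)\<^sup>2) \<partial>M) \<le> ennreal (80 * E)" .
        then have DIf: "(\<integral>\<^sup>+ s. ennreal ((Dfun s)\<^sup>2) \<partial>M) \<noteq> \<infinity>" by (auto simp: top_unique)
        have "enn2real (\<integral>\<^sup>+ s. ennreal ((Dfun s)\<^sup>2) \<partial>M) \<le> 80 * E"
        proof -
          have "ennreal (enn2real (\<integral>\<^sup>+ s. ennreal ((Dfun s)\<^sup>2) \<partial>M)) \<le> ennreal (80 * E)"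
            using DI DIf by (simp add: ennreal_enn2real_if)
          then show ?thesis using E0 by (simp add: ennreal_le_iff)
        qed
        then have "sqrt (enn2real (\<integral>\<^sup>+ s. ennreal ((Dfun s)\<^sup>2) \<partial>M)) \<le> sqrt (80 * E)" by simp
        also have "sqrt (80 * E) = Kc * n"
        proof -
          have "A powr (1-\<theta>) = cA powr (1-\<theta>) * n powr (1-\<theta>)" unfolding A_def using cA n by (simp add: powr_mult)
          then have "80 * E = (80 * cA powr (1-\<theta>) * cB) * n\<^sup>2"
            unfolding E_def B_def using n by (simp add: power2_eq_square mult_ac flip: powr_add)
          then show ?thesis unfolding Kc_def using n cA cB by (simp add: real_sqrt_mult)
        qed
        finally have "L2norm M Dfun \<le> ennreal (Kc * n)"
          using Dm DIf unfolding L2norm_def by (simp add: Let_def ennreal_leI)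
        also have "\<dots> = ennreal Kc * L2norm M x" unfolding L2x using n cB by (intro ennreal_mult) (auto simp: Kc_def)
        finally show ?thesis .
      qed
      then show "L2norm M (\<lambda>s. differential a' b' x s - (1 - \<theta>) * differential a b x s - \<theta> * KP2 M x s)
              \<le> ennreal Kc * L2norm M x" unfolding Dfun_def .
    qed
  qed
  ultimately show ?thesis by blast
qed


end
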